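(* For every shrub $P$ on a finite set $I$, the rational function $f_P$ is, when written as the displayed quotient of products of linear forms, in lowest terms, without repeated factors, and a product of linear factors (i.e. after cancellation nothing cancels: the linear forms appearing in numerator and denominator are pairwise distinct).
   Context: A shrub $P$ on a finite set $I$ is a set $E$ of edges (unordered pairs of distinct elements of $I$) with a height function $h_P:I\to\mathbb{N}$; $j$ covers $i$ if $\{i,j\}\in E$ and $h_P(j)=h_P(i)+1$. Axioms: (1) edges join vertices whose heights differ by $1$; (2) every vertex of positive height covers some vertex; (3) no four distinct $a,b,c,d$ with $a$ covering $b$ and $c$, $c$ covering $d$, $\{b,d\}\notin E$; (4) no five distinct $a,b,c,d,e$ with $a$ covering $c,d$, $b$ covering $d,e$, $\{a,e\}\notin E$, $\{b,c\}\notin E$. A vertex is ramified if it covers at least two distinct vertices; two ramified vertices are equivalent if they cover the same set of vertices. $\operatorname{Ram}(P)$ is the set of equivalence classes of ramified vertices; for $r\in\operatorname{Ram}(P)$, $r^-$ is the common set of vertices covered by the elements of $r$. For $S\subseteq I$, the upper ideal $\langle S\rangle_P$ generated by $S$ is the set of $j\in I$ such that every descending path $j=j_0,j_1,\dots,j_m$ (each $j_t$ covering $j_{t+1}$) ending at a vertex of height $0$ contains an element of $S$. For $J\subseteq I$ whose complement is a shrub (for the restricted edges and height), $P\setminus J$ denotes that restricted shrub; $P\setminus\langle r\rangle_P$ is such a shrub. Write $u[S]=\sum_{k\in S}u_k$. Define $$f_P=\frac{1}{\prod_{i\in I}u[\langle\{i\}\rangle_P]}\prod_{r\in\operatorname{Ram}(P)}\frac{u[\langle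 r^-\rangle_{P\setminus\langle r\rangle_P}]}{u[\langle r^-\rangle_P]}\in\mathbb{Q}(u_i:i\in I).$$ *)

theory Defs
  imports Complex_Main
begin

text \<open>A shrub on a finite vertex set I: edge set E (unordered pairs of distinct
vertices of I, as two-element sets) and a height function h (only its values on I matter).\<close>

definition covers :: "'a set set \<Rightarrow> ('a \<Rightarrow> nat) \<Rightarrow> 'a \<Rightarrow> 'a \<Rightarrow> bool" where
  "covers E h j i \<longleftrightarrow> {i, j} \<in> E \<and> h j = h i + 1"

definition shrub :: "'a set \<Rightarrow> 'a set set \<Rightarrow> ('a \<Rightarrow> nat) \<Rightarrow> bool" where
  "shrub I E h \<longleftrightarrow>
     finite I \<and>
     (\<forall>e\<in>E. \<exists>a b. e = {a, b} \<and> a \<noteq> b \<and> a \<in> I \<and> b \<in> I) \<and>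
     (\<forall>e\<in>E. \<exists>a b. e = {a, b} \<and> h a = h b + 1) \<and>
     (\<forall>i\<in>I. 0 < h i \<longrightarrow> (\<exists>j\<in>I. covers E h i j)) \<and>
     (\<forall>a\<in>I. \<forall>b\<in>I. \<forall>c\<in>I. \<forall>d\<in>I. distinct [a, b, c, d] \<longrightarrow>
        \<not> (covers E h a b \<and> covers E h a c \<and> covers E h c d \<and> {b, d} \<notin> E)) \<and>
     (\<forall>a\<in>I. \<forall>b\<in>I. \<forall>c\<in>I. \<forall>d\<in>I. \<forall>e\<in>I. distinct [a, b, c, d, e] \<longrightarrow>
        \<not> (covers E h a c \<and> covers E h a d \<and> covers E h b d \<and> covers E h b e \<and>
            {a, e} \<notin> E \<and> {b, c} \<notin> E))"

definition down :: "'a set \<Rightarrow> 'a set set \<Rightarrow> ('a \<Rightarrow> nat) \<Rightarrow> 'a \<Rightarrow> 'a set" where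
  "down I E h v = {w \<in> I. covers E h v w}"

definition ramified :: "'a set \<Rightarrow> 'a set set \<Rightarrow> ('a \<Rightarrow> nat) \<Rightarrow> 'a \<Rightarrow> bool" where
  "ramified I E h v \<longleftrightarrow> v \<in> I \<and> (\<exists>x y. x \<noteq> y \<and> x \<in> down I E h v \<and> y \<in> down I E h v)"

definition Ram :: "'a set \<Rightarrow> 'a set set \<Rightarrow> ('a \<Rightarrow> nat) \<Rightarrow> 'a set set" where
  "Ram I E h = {{w. ramified I E h w \<and> down I E h w = down I E h v} | v. ramified I E h v}"

definition rminus :: "'a set \<Rightarrow> 'a set set \<Rightarrow> ('a \<Rightarrow> nat) \<Rightarrow> 'a set \<Rightarrow> 'a set" where
  "rminus I E h r = (THE S. \<forall>v\<in>r. down I E h v = S)"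

definition desc_path :: "'a set \<Rightarrow> 'a set set \<Rightarrow> ('a \<Rightarrow> nat) \<Rightarrow> 'a \<Rightarrow> 'a list \<Rightarrow> bool" where
  "desc_path I E h j xs \<longleftrightarrow> xs \<noteq> [] \<and> hd xs = j \<and> set xs \<subseteq> I \<and>
     (\<forall>t. Suc t < length xs \<longrightarrow> covers E h (xs ! t) (xs ! Suc t)) \<and> h (last xs) = 0"

definition upideal :: "'a set \<Rightarrow> 'a set set \<Rightarrow> ('a \<Rightarrow> nat) \<Rightarrow> 'a set \<Rightarrow> 'a set" where
  "upideal I E h S = {j \<in> I. \<forall>xs. desc_path I E h j xs \<longrightarrow> set xs \<inter> S \<noteq> {}}"

definition restr_edges :: "'a set set \<Rightarrow> 'a set \<Rightarrow> 'a set set" where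
  "restr_edges E K = {e \<in> E. e \<subseteq> K}"

text \<open>The linear form u[S] = sum of u_k over k in S, represented by its coefficient vector.\<close>
definition linform :: "'a set \<Rightarrow> ('a \<Rightarrow> rat)" where
  "linform S = (\<lambda>k. if k \<in> S then 1 else 0)"

text \<open>The factors of the displayed expression for f_P, indexed by
  Inl i (denominator u[<{i}>_P]), Inr (Inl r) (denominator u[<r^->_P]),
  Inr (Inr r) (numerator u[<r^->_{P \ <r>_P}]).\<close>
definition factor_set :: "'a set \<Rightarrow> 'a set set \<Rightarrow> ('a \<Rightarrow> nat) \<Rightarrow> 'a + 'a set + 'a set \<Rightarrow> 'a set" where
  "factor_set I E h x = (case x of
      Inl i \<Rightarrow> upideal I E h {i}
    | Inr (Inl r) \<Rightarrow> upideal I E h (rminus I E h r)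
    | Inr (Inr r) \<Rightarrow>
        (let K = I - upideal I E h r in upideal K (restr_edges E K) h (rminus I E h r)))"

definition factor_index :: "'a set \<Rightarrow> 'a set set \<Rightarrow> ('a \<Rightarrow> nat) \<Rightarrow> ('a + 'a set + 'a set) set" where
  "factor_index I E h = Inl ` I \<union> Inr ` Inl ` Ram I E h \<union> Inr ` Inr ` Ram I E h"

end

theory Submission
  imports Defs
begin


definition haspaths :: "'a set \<Rightarrow> 'a set set \<Rightarrow> ('a \<Rightarrow> nat) \<Rightarrow> bool" where
  "haspaths K E h \<longleftrightarrow> (\<forall>j\<in>K. \<exists>xs. desc_path K E h j xs)"

lemma path_height:
  assumes "desc_path K E h j xs" "t < length xs"
  shows "h (xs!t) + t = h j"
  using assms(2)
proof (induction t)
  case 0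
  then show ?case using assms(1) by (auto simp: desc_path_def hd_conv_nth)
next
  case (Suc t)
  then have "covers E h (xs ! t) (xs ! Suc t)" using assms(1) by (auto simp: desc_path_def)
  then show ?case using Suc by (auto simp: covers_def)
qed

lemma ideal_low:
  assumes "j \<in> upideal K E h S" "desc_path K E h j xs"
  shows "\<exists>s\<in>S. h s \<le> h j \<and> (h s = h j \<longrightarrow> s = j)"
proof -
  have "set xs \<inter> S \<noteq> {}" using assms by (auto simp: upideal_def)
  then obtain t where t: "t < length xs" "xs ! t \<in> S" by (metis disjoint_iff in_set_conv_nth)
  have hh: "h (xs!t) + t = h j" using path_height[OF assms(2) t(1)] .
  have "xs ! 0 = j" using assms(2) by (auto simp: desc_path_def hd_conv_nth)
  then show ?thesis using t hh by (intro bexI[of _ "xs!t"]) auto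
qed

lemma S_sub:
  assumes "S \<subseteq> K" shows "S \<subseteq> upideal K E h S"
proof
  fix s assume s: "s \<in> S"
  have "set xs \<inter> S \<noteq> {}" if "desc_path K E h s xs" for xs
  proof -
    from that have "xs \<noteq> []" "hd xs = s" by (simp_all add: desc_path_def)
    then have "s \<in> set xs" by (metis hd_in_set)
    then show ?thesis using s by blast
  qed
  then show "s \<in> upideal K E h S" using s assms by (auto simp: upideal_def)
qed

lemma bottom:
  assumes "haspaths K E h" "S \<subseteq> K" "\<forall>s\<in>S. h s = c"
  shows "(\<forall>j\<in>upideal K E h S. c \<le> h j) \<and> {j \<in> upideal K E h S. h j \<le> c} = S"
proof -
  have low: "\<exists>s\<in>S. h s \<le> h j \<and> (h s = h j \<longrightarrow> s = j)" if "j \<in> upideal K E h S" for j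
  proof -
    have "j \<in> K" using that by (auto simp: upideal_def)
    then obtain xs where "desc_path K E h j xs" using assms(1) by (auto simp: haspaths_def)
    then show ?thesis by (rule ideal_low[OF that])
  qed
  show ?thesis
  proof
    show "\<forall>j\<in>upideal K E h S. c \<le> h j"
    proof
      fix j assume "j \<in> upideal K E h S"
      then obtain s where "s \<in> S" "h s \<le> h j" using low by blast
      then show "c \<le> h j" using assms(3) by auto
    qed
    show "{j \<in> upideal K E h S. h j \<le> c} = S"
    proof
      show "{j \<in> upideal K E h S. h j \<le> c} \<subseteq> S"
      proof
        fix j assume "j \<in> {j \<in> upideal K E h S. h j \<le> c}"
        then have j: "j \<in> upideal K E h S" "h j \<le> c" by auto
        then obtain s where s: "s \<in> S" "h s \<le> h j" "h s = h j \<longrightarrow> s = j" using low by blast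
        then have "h s = c" using assms(3) by auto
        then show "j \<in> S" using s j by auto
      qed
      show "S \<subseteq> {j \<in> upideal K E h S. h j \<le> c}"
      proof
        fix s assume s: "s \<in> S"
        then have "s \<in> upideal K E h S" using S_sub[OF assms(2)] by blast
        moreover have "h s \<le> c" using s assms(3) by simp
        ultimately show "s \<in> {j \<in> upideal K E h S. h j \<le> c}" by simp
      qed
    qed
  qed
qed

lemma compare:
  assumes "haspaths K1 E1 h" "S1 \<subseteq> K1" "\<forall>s\<in>S1. h s = c1" "S1 \<noteq> {}"
      and "haspaths K2 E2 h" "S2 \<subseteq> K2" "\<forall>s\<in>S2. h s = c2" "S2 \<noteq> {}"
      and eq: "upideal K1 E1 h S1 = upideal K2 E2 h S2"
  shows "S1 = S2"
proof -
  have b1a: "\<forall>j\<in>upideal K1 E1 h S1. c1 \<le> h j" and b1b: "{j \<in> upideal K1 E1 h S1. h j \<le> c1} = S1"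
    using bottom[OF assms(1-3)] by blast+
  have b2a: "\<forall>j\<in>upideal K2 E2 h S2. c2 \<le> h j" and b2b: "{j \<in> upideal K2 E2 h S2. h j \<le> c2} = S2"
    using bottom[OF assms(5-7)] by blast+
  obtain s1 where s1: "s1 \<in> S1" using assms(4) by auto
  obtain s2 where s2: "s2 \<in> S2" using assms(8) by auto
  have "s1 \<in> upideal K2 E2 h S2" using S_sub[OF assms(2)] s1 eq by blast
  then have "c2 \<le> h s1" using b2a by blast
  then have "c2 \<le> c1" using s1 assms(3) by simp
  have "s2 \<in> upideal K1 E1 h S1" using S_sub[OF assms(6)] s2 eq by blast
  then have "c1 \<le> h s2" using b1a by blast
  then have "c1 \<le> c2" using s2 assms(7) by simp
  have "c1 = c2" using \<open>c1 \<le> c2\<close> \<open>c2 \<le> c1\<close> by simp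
  have "S1 = {j \<in> upideal K1 E1 h S1. h j \<le> c1}" using b1b by simp
  also have "\<dots> = {j \<in> upideal K2 E2 h S2. h j \<le> c2}" using eq \<open>c1 = c2\<close> by simp
  also have "\<dots> = S2" using b2b by simp
  finally show ?thesis .
qed

lemma exists_path:
  assumes ax: "\<forall>i\<in>I. 0 < h i \<longrightarrow> (\<exists>j\<in>I. covers E h i j)"
  shows "j \<in> I \<Longrightarrow> \<exists>xs. desc_path I E h j xs"
proof (induction "h j" arbitrary: j)
  case 0
  then show ?case by (intro exI[of _ "[j]"]) (auto simp: desc_path_def)
next
  case (Suc n)
  then obtain k where k: "k \<in> I" "covers E h j k" using ax by fastforce
  then have "h k = n" using Suc by (auto simp: covers_def)
  then obtain ys where ys: "desc_path I E h k ys" using Suc k by auto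
  have "ys \<noteq> []" "hd ys = k" using ys by (auto simp: desc_path_def)
  then have y0: "ys ! 0 = k" by (simp add: hd_conv_nth)
  have "desc_path I E h j (j # ys)"
    unfolding desc_path_def
  proof (intro conjI allI impI)
    show "set (j # ys) \<subseteq> I" using ys Suc.prems by (auto simp: desc_path_def)
    show "h (last (j # ys)) = 0" using ys \<open>ys \<noteq> []\<close> by (auto simp: desc_path_def)
    fix t assume "Suc t < length (j # ys)"
    then show "covers E h ((j # ys) ! t) ((j # ys) ! Suc t)"
      using ys k y0 by (cases t) (auto simp: desc_path_def)
  qed auto
  then show ?case by blast
qed

lemma path_drop:
  assumes "desc_path K E h j xs" "t < length xs"
  shows "desc_path K E h (xs!t) (drop t xs)"
  using assms by (auto simp: desc_path_def hd_drop_conv_nth last_drop dest: in_set_dropD)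

lemma path_restr:
  assumes "desc_path I E h j xs" "set xs \<subseteq> K"
  shows "desc_path K (restr_edges E K) h j xs"
  using assms unfolding desc_path_def restr_edges_def covers_def
  by (metis (no_types, lifting) Suc_lessD empty_subsetI insert_subset mem_Collect_eq nth_mem subset_trans)

lemma haspaths_K:
  assumes "haspaths I E h"
  shows "haspaths (I - upideal I E h R) (restr_edges E (I - upideal I E h R)) h"
  unfolding haspaths_def
proof
  fix j assume j: "j \<in> I - upideal I E h R"
  then obtain xs where xs: "desc_path I E h j xs" "set xs \<inter> R = {}"
    by (auto simp: upideal_def)
  have "set xs \<subseteq> I - upideal I E h R"
  proof
    fix x assume "x \<in> set xs"
    then obtain t where t: "t < length xs" "x = xs!t" by (auto simp: in_set_conv_nth)
    have "desc_path I E h x (drop t xs)" using path_drop[OF xs(1) t(1)] t by simp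
    moreover have "set (drop t xs) \<inter> R = {}" using xs(2) by (auto dest: in_set_dropD)
    ultimately have "x \<notin> upideal I E h R" by (auto simp: upideal_def)
    moreover have "x \<in> I" using xs(1) \<open>x \<in> set xs\<close> by (auto simp: desc_path_def)
    ultimately show "x \<in> I - upideal I E h R" by simp
  qed
  then have "desc_path (I - upideal I E h R) (restr_edges E (I - upideal I E h R)) h j xs"
    by (rule path_restr[OF xs(1)])
  then show "\<exists>xs. desc_path (I - upideal I E h R) (restr_edges E (I - upideal I E h R)) h j xs"
    by (rule exI)
qed


lemma rminus_eq:
  assumes "ramified I E h v" "r = {w. ramified I E h w \<and> down I E h w = down I E h v}"
  shows "rminus I E h r = down I E h v"
  unfolding rminus_def
proof (rule the_equality)
  show "\<forall>u\<in>r. down I E h u = down I E h v" using assms(2) by simp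
  fix S assume "\<forall>u\<in>r. down I E h u = S"
  moreover have "v \<in> r" using assms by simp
  ultimately show "S = down I E h v" by blast
qed

lemma Ram_facts:
  assumes "r \<in> Ram I E h"
  obtains v where "ramified I E h v" "r = {w. ramified I E h w \<and> down I E h w = down I E h v}"
    "rminus I E h r = down I E h v"
proof -
  have "\<exists>v. ramified I E h v \<and> r = {w. ramified I E h w \<and> down I E h w = down I E h v}"
    using assms unfolding Ram_def by blast
  then obtain v where v: "ramified I E h v" "r = {w. ramified I E h w \<and> down I E h w = down I E h v}"
    by blast
  show thesis by (rule that[OF v(1) v(2) rminus_eq[OF v(1) v(2)]])
qed

lemma ram_props:
  assumes ax: "\<forall>i\<in>I. 0 < h i \<longrightarrow> (\<exists>j\<in>I. covers E h i j)"
    and rv: "ramified I E h v" and r: "r = {w. ramified I E h w \<and> down I E h w = down I E h v}"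
  shows "down I E h v \<subseteq> I" "\<exists>x y. x \<noteq> y \<and> x \<in> down I E h v \<and> y \<in> down I E h v"
    "\<forall>w\<in>down I E h v. h w + 1 = h v" "r \<subseteq> I" "v \<in> r"
    "r \<subseteq> upideal I E h (down I E h v)" "down I E h v \<inter> upideal I E h r = {}"
proof -
  show "down I E h v \<subseteq> I" by (auto simp: down_def)
  show "\<exists>x y. x \<noteq> y \<and> x \<in> down I E h v \<and> y \<in> down I E h v" using rv by (auto simp: ramified_def)
  show hw: "\<forall>w\<in>down I E h v. h w + 1 = h v" by (auto simp: down_def covers_def)
  show "r \<subseteq> I" using r by (auto simp: ramified_def)
  show "v \<in> r" using r rv by simp
  have hu: "h u = h w + 1" if "u \<in> r" "w \<in> down I E h v" for u w
  proof -
    have "w \<in> down I E h u" using that r by simp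
    then show ?thesis by (auto simp: down_def covers_def)
  qed
  show "r \<subseteq> upideal I E h (down I E h v)"
  proof
    fix u assume u: "u \<in> r"
    then have uI: "u \<in> I" using r by (auto simp: ramified_def)
    obtain w where w: "w \<in> down I E h v" using rv by (auto simp: ramified_def)
    have pos: "0 < h u" using hu[OF u w] by simp
    have "set xs \<inter> down I E h v \<noteq> {}" if p: "desc_path I E h u xs" for xs
    proof -
      have ne: "xs \<noteq> []" and x0: "xs ! 0 = u" using p by (auto simp: desc_path_def hd_conv_nth)
      have "length xs \<noteq> 1"
      proof
        assume "length xs = 1"
        then have "last xs = xs ! 0" using ne by (simp add: last_conv_nth)
        then show False using p pos x0 by (simp add: desc_path_def)
      qed
      then have len: "Suc 0 < length xs" using ne by (cases xs) auto
      then have cv: "covers E h u (xs ! Suc 0)" using p x0 by (auto simp: desc_path_def)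
      have inI: "xs ! Suc 0 \<in> I" using p len by (auto simp: desc_path_def dest!: nth_mem)
      have "xs ! Suc 0 \<in> down I E h u" using cv inI by (simp add: down_def)
      then have "xs ! Suc 0 \<in> down I E h v" using u r by simp
      moreover have "xs ! Suc 0 \<in> set xs" using len by simp
      ultimately show ?thesis by blast
    qed
    then show "u \<in> upideal I E h (down I E h v)" using uI by (auto simp: upideal_def)
  qed
  show "down I E h v \<inter> upideal I E h r = {}"
  proof (rule ccontr)
    assume "down I E h v \<inter> upideal I E h r \<noteq> {}"
    then obtain w where w: "w \<in> down I E h v" "w \<in> upideal I E h r" by blast
    then have "w \<in> I" by (auto simp: down_def)
    then obtain xs where p: "desc_path I E h w xs" using exists_path[OF ax] by blast
    then have "set xs \<inter> r \<noteq> {}" using w(2) by (auto simp: upideal_def)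
    then obtain t where t: "t < length xs" "xs ! t \<in> r" by (metis disjoint_iff in_set_conv_nth)
    have "h (xs ! t) + t = h w" using path_height[OF p t(1)] .
    moreover have "h (xs ! t) = h w + 1" using hu[OF t(2) w(1)] .
    ultimately show False by simp
  qed
qed

lemma linform_inj: "linform A = linform B \<Longrightarrow> A = B"
proof -
  assume eq: "linform A = linform B"
  have "x \<in> A \<longleftrightarrow> x \<in> B" for x
    using fun_cong[OF eq, of x] by (simp add: linform_def split: if_splits)
  then show ?thesis by blast
qed

lemma linform_ne: "A \<noteq> {} \<Longrightarrow> linform A \<noteq> (\<lambda>_. 0)"
proof
  assume "A \<noteq> {}" "linform A = (\<lambda>_. 0)"
  then obtain x where "x \<in> A" by blast
  then have "linform A x = 1" by (simp add: linform_def)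
  then show False using \<open>linform A = (\<lambda>_. 0)\<close> by simp
qed


theorem mainTheorem11:
  fixes I :: "'a set" and E :: "'a set set" and h :: "'a \<Rightarrow> nat"
  assumes "shrub I E h"
  shows "(\<forall>x\<in>factor_index I E h. linform (factor_set I E h x) \<noteq> (\<lambda>_. 0))
       \<and> inj_on (\<lambda>x. linform (factor_set I E h x)) (factor_index I E h)"
proof -
  have ax: "\<forall>i\<in>I. 0 < h i \<longrightarrow> (\<exists>j\<in>I. covers E h i j)"
    using assms by (simp add: shrub_def)
  have hpI: "haspaths I E h" using exists_path[OF ax] by (auto simp: haspaths_def)
  define base :: "'a + 'a set + 'a set \<Rightarrow> 'a set" where
    "base x = (case x of Inl i \<Rightarrow> {i} | Inr (Inl r) \<Rightarrow> rminus I E h r | Inr (Inr r) \<Rightarrow> rminus I E h r)" for x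
  have key: "\<exists>K E' c. haspaths K E' h \<and> base x \<subseteq> K \<and> (\<forall>s\<in>base x. h s = c) \<and> base x \<noteq> {}
      \<and> factor_set I E h x = upideal K E' h (base x)" if x: "x \<in> factor_index I E h" for x
  proof -
    consider (a) i where "x = Inl i" "i \<in> I" | (b) r where "x = Inr (Inl r)" "r \<in> Ram I E h"
      | (c) r where "x = Inr (Inr r)" "r \<in> Ram I E h"
      using x unfolding factor_index_def by blast
    then show ?thesis
    proof cases
      case a
      then show ?thesis using hpI
        by (intro exI[of _ I] exI[of _ E] exI[of _ "h i"]) (simp add: base_def factor_set_def)
    next
      case b
      obtain v where v: "ramified I E h v" "r = {w. ramified I E h w \<and> down I E h w = down I E h v}"
        "rminus I E h r = down I E h v" using Ram_facts[OF b(2)] by blast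
      note P = ram_props[OF ax v(1) v(2)]
      have hc: "\<forall>s\<in>down I E h v. h s = h v - 1" using P(3) by auto
      have ne: "down I E h v \<noteq> {}" using P(2) by blast
      show ?thesis using hpI P(1) hc ne b(1) v(3)
        by (intro exI[of _ I] exI[of _ E] exI[of _ "h v - 1"]) (simp add: base_def factor_set_def)
    next
      case c
      obtain v where v: "ramified I E h v" "r = {w. ramified I E h w \<and> down I E h w = down I E h v}"
        "rminus I E h r = down I E h v" using Ram_facts[OF c(2)] by blast
      note P = ram_props[OF ax v(1) v(2)]
      define K where "K = I - upideal I E h r"
      have hpK: "haspaths K (restr_edges E K) h" unfolding K_def by (rule haspaths_K[OF hpI])
      have sub: "down I E h v \<subseteq> K" using P(1) P(7) unfolding K_def by blast
      have hc: "\<forall>s\<in>down I E h v. h s = h v - 1" using P(3) by auto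
      have ne: "down I E h v \<noteq> {}" using P(2) by blast
      have fs: "factor_set I E h x = upideal K (restr_edges E K) h (down I E h v)"
        using c(1) v(3) by (simp add: factor_set_def K_def Let_def)
      show ?thesis using hpK sub hc ne fs c(1) v(3)
        by (intro exI[of _ K] exI[of _ "restr_edges E K"] exI[of _ "h v - 1"]) (simp add: base_def)
    qed
  qed
  have nonempty: "factor_set I E h x \<noteq> {}" if x: "x \<in> factor_index I E h" for x
  proof -
    obtain K E' c where k: "haspaths K E' h" "base x \<subseteq> K" "base x \<noteq> {}"
      "factor_set I E h x = upideal K E' h (base x)" using key[OF x] by blast
    then show ?thesis using S_sub[OF k(2), of E' h] by blast
  qed
  have bas: "base x = base y" if x: "x \<in> factor_index I E h" and y: "y \<in> factor_index I E h"
    and eq: "factor_set I E h x = factor_set I E h y" for x y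
  proof -
    obtain K1 E1 c1 where k1: "haspaths K1 E1 h" "base x \<subseteq> K1" "\<forall>s\<in>base x. h s = c1" "base x \<noteq> {}"
      "factor_set I E h x = upideal K1 E1 h (base x)" using key[OF x] by blast
    obtain K2 E2 c2 where k2: "haspaths K2 E2 h" "base y \<subseteq> K2" "\<forall>s\<in>base y. h s = c2" "base y \<noteq> {}"
      "factor_set I E h y = upideal K2 E2 h (base y)" using key[OF y] by blast
    show ?thesis using compare[OF k1(1-4) k2(1-4)] k1(5) k2(5) eq by simp
  qed
  have two: "rminus I E h r \<noteq> {i}" if r: "r \<in> Ram I E h" for r i
  proof -
    obtain v where v: "ramified I E h v" "r = {w. ramified I E h w \<and> down I E h w = down I E h v}"
      "rminus I E h r = down I E h v" using Ram_facts[OF r] by blast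
    show ?thesis using ram_props(2)[OF ax v(1) v(2)] v(3) by auto
  qed
  have rdet: "r = r'" if rr: "r \<in> Ram I E h" "r' \<in> Ram I E h" "rminus I E h r = rminus I E h r'" for r r'
  proof -
    obtain v where v: "ramified I E h v" "r = {w. ramified I E h w \<and> down I E h w = down I E h v}"
      "rminus I E h r = down I E h v" using Ram_facts[OF rr(1)] by blast
    obtain v' where v': "ramified I E h v'" "r' = {w. ramified I E h w \<and> down I E h w = down I E h v'}"
      "rminus I E h r' = down I E h v'" using Ram_facts[OF rr(2)] by blast
    show ?thesis using v v' rr(3) by simp
  qed
  have numden: "factor_set I E h (Inr (Inl r)) \<noteq> factor_set I E h (Inr (Inr r))" if r: "r \<in> Ram I E h" for r
  proof
    assume eq: "factor_set I E h (Inr (Inl r)) = factor_set I E h (Inr (Inr r))"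
    obtain v where v: "ramified I E h v" "r = {w. ramified I E h w \<and> down I E h w = down I E h v}"
      "rminus I E h r = down I E h v" using Ram_facts[OF r] by blast
    note P = ram_props[OF ax v(1) v(2)]
    define K where "K = I - upideal I E h r"
    have vin: "v \<in> factor_set I E h (Inr (Inl r))" using P(5) P(6) v(3) by (auto simp: factor_set_def)
    have sub: "factor_set I E h (Inr (Inr r)) \<subseteq> K"
      by (auto simp: factor_set_def K_def Let_def upideal_def)
    have vK: "v \<notin> K" using S_sub[OF P(4), of E h] P(5) unfolding K_def by blast
    from vin have "v \<in> factor_set I E h (Inr (Inr r))" unfolding eq .
    then have "v \<in> K" using sub by (rule rev_subsetD)
    then show False using vK by (rule notE[rotated])
  qed
  show ?thesis
  proof
    show "\<forall>x\<in>factor_index I E h. linform (factor_set I E h x) \<noteq> (\<lambda>_. 0)"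
    proof
      fix x assume "x \<in> factor_index I E h"
      then show "linform (factor_set I E h x) \<noteq> (\<lambda>_. 0)" by (rule linform_ne[OF nonempty])
    qed
    show "inj_on (\<lambda>x. linform (factor_set I E h x)) (factor_index I E h)"
    proof (rule inj_onI)
      fix x y assume x: "x \<in> factor_index I E h" and y: "y \<in> factor_index I E h"
        and le: "linform (factor_set I E h x) = linform (factor_set I E h y)"
      from le have eq: "factor_set I E h x = factor_set I E h y" by (rule linform_inj)
      have b: "base x = base y" using bas[OF x y eq] .
      consider (a) i where "x = Inl i" "i \<in> I" | (b) r where "x = Inr (Inl r)" "r \<in> Ram I E h"
        | (c) r where "x = Inr (Inr r)" "r \<in> Ram I E h"
        using x unfolding factor_index_def by blast
      then show "x = y"
      proof cases
        case a
        consider (a') j where "y = Inl j" | (b') r where "y = Inr (Inl r)" "r \<in> Ram I E h"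
          | (c') r where "y = Inr (Inr r)" "r \<in> Ram I E h"
          using y unfolding factor_index_def by blast
        then show ?thesis
        proof cases
          case a' then show ?thesis using a b by (simp add: base_def)
        next
          case b' then show ?thesis using a b two[OF b'(2)] two[OF b'(2), THEN not_sym] by (simp add: base_def)
        next
          case c' then show ?thesis using a b two[OF c'(2)] two[OF c'(2), THEN not_sym] by (simp add: base_def)
        qed
      next
        case xb: b
        consider (a') j where "y = Inl j" | (b') r' where "y = Inr (Inl r')" "r' \<in> Ram I E h"
          | (c') r' where "y = Inr (Inr r')" "r' \<in> Ram I E h"
          using y unfolding factor_index_def by blast
        then show ?thesis
        proof cases
          case a' then show ?thesis using xb b two[OF xb(2)] two[OF xb(2), THEN not_sym] by (simp add: base_def)
        next
          case b' then show ?thesis using xb b rdet[OF xb(2) b'(2)] by (simp add: base_def)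
        next
          case c'
          then have "r = r'" using xb b rdet[OF xb(2) c'(2)] by (simp add: base_def)
          then show ?thesis using numden[OF xb(2)] eq xb c' by simp
        qed
      next
        case xc: c
        consider (a') j where "y = Inl j" | (b') r' where "y = Inr (Inl r')" "r' \<in> Ram I E h"
          | (c') r' where "y = Inr (Inr r')" "r' \<in> Ram I E h"
          using y unfolding factor_index_def by blast
        then show ?thesis
        proof cases
          case a' then show ?thesis using xc b two[OF xc(2)] two[OF xc(2), THEN not_sym] by (simp add: base_def)
        next
          case b'
          then have "r = r'" using xc b rdet[OF xc(2) b'(2)] by (simp add: base_def)
          then show ?thesis using numden[OF xc(2)] eq xc b' by simp
        next
          case c' then show ?thesis using xc b rdet[OF xc(2) c'(2)] by (simp add: base_def)
        qed
      qed
    qed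
  qed
qed

end
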